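(* Let $S\ni h$ be a polarized lattice. For any pair $\Delta',\Delta''$ of Weyl chambers for $\operatorname{rt}(S,h)$, there are canonical isomorphisms $\operatorname{Fn}_{\Delta'}(S,h)\cong\operatorname{Fn}_{\Delta''}(S,h)$ and $\operatorname{Fex}_{\Delta'}(S,h)\cong\operatorname{Fex}_{\Delta''}(S,h)$.
   Context: All lattices are even and nondegenerate. A polarized lattice is $(S,h)$ with $S$ hyperbolic and $h^2>0$. $\operatorname{root}_n(S,h)=\{r\in S: r^2=-2,\ r\cdot h=n\}$; $\operatorname{rt}(S,h)$ is the root lattice generated by $\operatorname{root}_0(S,h)$. A Weyl chamber $\Delta$ is determined by its positive roots $P_\Delta$, and $\mathfrak{b}(\Delta)$ is its set of simple (indecomposable positive) roots, called exceptional divisors. The Fano graph $\operatorname{Fn}_\Delta(S,h)=\{l\in\operatorname{root}_1(S,h): l\cdot e\ge0\ \forall e\in\mathfrak{b}(\Delta)\}$ has edges of multiplicity $l_1\cdot l_2$ between distinct vertices. The extended Fano graph $\operatorname{Fex}_\Delta(S,h)=\operatorname{Fn}_\Delta(S,h)\cup\mathfrak{b}(\Delta)$ has the same edge convention and vertices colored by $v\cdot h\in\{0,1\}$; isomorphisms are of (bi-colored) graphs. *)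

theory Defs
  imports "HOL-Analysis.Analysis"
begin

text \<open>A lattice of rank CARD('n) is modelled as int^'n with integral Gram matrix Q.\<close>

definition bf :: "int^'n^'n \<Rightarrow> int^'n \<Rightarrow> int^'n \<Rightarrow> int" where
  "bf Q x y = (\<Sum>i\<in>UNIV. \<Sum>j\<in>UNIV. x$i * Q$i$j * y$j)"

definition bfR :: "int^'n^'n \<Rightarrow> real^'n \<Rightarrow> real^'n \<Rightarrow> real" where
  "bfR Q x y = (\<Sum>i\<in>UNIV. \<Sum>j\<in>UNIV. x$i * of_int (Q$i$j) * y$j)"

definition rvec :: "int^'n \<Rightarrow> real^'n" where
  "rvec x = (\<chi> i. of_int (x$i))"

definition even_lattice :: "int^'n^'n \<Rightarrow> bool" where
  "even_lattice Q \<longleftrightarrow> (\<forall>i j. Q$i$j = Q$j$i) \<and> (\<forall>i. even (Q$i$i))"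

definition nondegenerate :: "int^'n^'n \<Rightarrow> bool" where
  "nondegenerate Q \<longleftrightarrow> det Q \<noteq> 0"

text \<open>Hyperbolic: signature (1, rank-1), i.e. positive index of inertia equal to 1.\<close>
definition hyperbolic :: "int^'n^'n \<Rightarrow> bool" where
  "hyperbolic Q \<longleftrightarrow> even_lattice Q \<and> nondegenerate Q \<and>
     (\<exists>v. bfR Q v v > 0) \<and>
     (\<forall>u w. bfR Q u u > 0 \<and> bfR Q u w = 0 \<longrightarrow> bfR Q w w \<le> 0)"

definition polarized :: "int^'n^'n \<Rightarrow> int^'n \<Rightarrow> bool" where
  "polarized Q h \<longleftrightarrow> hyperbolic Q \<and> bf Q h h > 0"

definition roots_n :: "int^'n^'n \<Rightarrow> int^'n \<Rightarrow> int \<Rightarrow> (int^'n) set" where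
  "roots_n Q h n = {r. bf Q r r = -2 \<and> bf Q r h = n}"

text \<open>A Weyl chamber of rt(S,h) (a component of the complement of the root hyperplanes
  in rt(S,h) tensor R), represented by its set of positive roots.\<close>
definition weyl_chamber :: "int^'n^'n \<Rightarrow> int^'n \<Rightarrow> (int^'n) set \<Rightarrow> bool" where
  "weyl_chamber Q h P \<longleftrightarrow> (\<exists>v \<in> span (rvec ` roots_n Q h 0).
      (\<forall>r\<in>roots_n Q h 0. bfR Q (rvec r) v \<noteq> 0) \<and>
      P = {r \<in> roots_n Q h 0. bfR Q (rvec r) v > 0})"

definition simple_roots :: "(int^'n) set \<Rightarrow> (int^'n) set" where
  "simple_roots P = {r \<in> P. \<not> (\<exists>a\<in>P. \<exists>b\<in>P. r = a + b)}"

definition fano :: "int^'n^'n \<Rightarrow> int^'n \<Rightarrow> (int^'n) set \<Rightarrow> (int^'n) set" where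
  "fano Q h P = {l \<in> roots_n Q h 1. \<forall>e\<in>simple_roots P. bf Q l e \<ge> 0}"

definition fano_ext :: "int^'n^'n \<Rightarrow> int^'n \<Rightarrow> (int^'n) set \<Rightarrow> (int^'n) set" where
  "fano_ext Q h P = fano Q h P \<union> simple_roots P"

text \<open>Isomorphism of graphs whose edge multiplicities are given by the form.\<close>
definition graph_iso :: "int^'n^'n \<Rightarrow> (int^'n) set \<Rightarrow> (int^'n) set \<Rightarrow> (int^'n \<Rightarrow> int^'n) \<Rightarrow> bool" where
  "graph_iso Q V1 V2 f \<longleftrightarrow> bij_betw f V1 V2 \<and>
     (\<forall>x\<in>V1. \<forall>y\<in>V1. x \<noteq> y \<longrightarrow> bf Q (f x) (f y) = bf Q x y)"

text \<open>Isomorphism of bi-coloured graphs (colour of v is v.h).\<close>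
definition colored_graph_iso :: "int^'n^'n \<Rightarrow> int^'n \<Rightarrow> (int^'n) set \<Rightarrow> (int^'n) set \<Rightarrow> (int^'n \<Rightarrow> int^'n) \<Rightarrow> bool" where
  "colored_graph_iso Q h V1 V2 f \<longleftrightarrow> graph_iso Q V1 V2 f \<and>
     (\<forall>x\<in>V1. bf Q (f x) h = bf Q x h)"

definition refl_root :: "int^'n^'n \<Rightarrow> int^'n \<Rightarrow> int^'n \<Rightarrow> int^'n" where
  "refl_root Q r x = x + (bf Q x r) *s r"

inductive_set weyl_group :: "int^'n^'n \<Rightarrow> int^'n \<Rightarrow> (int^'n \<Rightarrow> int^'n) set"
  for Q h where
  id: "id \<in> weyl_group Q h"
| step: "w \<in> weyl_group Q h \<Longrightarrow> r \<in> roots_n Q h 0 \<Longrightarrow> refl_root Q r \<circ> w \<in> weyl_group Q h"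

end

theory Submission
  imports Defs
begin


lemma bf_sym: "even_lattice Q \<Longrightarrow> bf Q x y = bf Q y x"
  unfolding bf_def even_lattice_def
  by (subst sum.swap) (simp add: mult.commute mult.left_commute)

lemma bf_add_left: "bf Q (x + y) z = bf Q x z + bf Q y z"
  unfolding bf_def by (simp add: algebra_simps sum.distrib)
lemma bf_add_right: "bf Q z (x + y) = bf Q z x + bf Q z y"
  unfolding bf_def by (simp add: algebra_simps sum.distrib)
lemma bf_smult_left: "bf Q (c *s x) z = c * bf Q x z"
  unfolding bf_def by (simp add: sum_distrib_left algebra_simps)
lemma bf_smult_right: "bf Q z (c *s x) = c * bf Q z x"
  unfolding bf_def by (simp add: sum_distrib_left algebra_simps)
lemma bf_neg_left: "bf Q (- x) z = - bf Q x z"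
  unfolding bf_def by (simp add: sum_negf)
lemma bf_neg_right: "bf Q z (- x) = - bf Q z x"
  unfolding bf_def by (simp add: sum_negf)
lemma bf_diff_left: "bf Q (x - y) z = bf Q x z - bf Q y z"
  unfolding bf_def by (simp add: algebra_simps sum_subtractf)
lemma bf_diff_right: "bf Q z (x - y) = bf Q z x - bf Q z y"
  unfolding bf_def by (simp add: algebra_simps sum_subtractf)
lemma bf_zero_left[simp]: "bf Q 0 z = 0" unfolding bf_def by simp

lemma bfR_sym: "even_lattice Q \<Longrightarrow> bfR Q x y = bfR Q y x"
  unfolding bfR_def even_lattice_def
  by (subst sum.swap) (simp add: mult.commute mult.left_commute)
lemma bfR_add_left: "bfR Q (x + y) z = bfR Q x z + bfR Q y z"
  unfolding bfR_def by (simp add: algebra_simps sum.distrib)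
lemma bfR_add_right: "bfR Q z (x + y) = bfR Q z x + bfR Q z y"
  unfolding bfR_def by (simp add: algebra_simps sum.distrib)
lemma bfR_scale_left: "bfR Q (c *\<^sub>R x) z = c * bfR Q x z"
  unfolding bfR_def by (simp add: sum_distrib_left algebra_simps)
lemma bfR_scale_right: "bfR Q z (c *\<^sub>R x) = c * bfR Q z x"
  unfolding bfR_def by (simp add: sum_distrib_left algebra_simps)
lemma bfR_diff_left: "bfR Q (x - y) z = bfR Q x z - bfR Q y z"
  unfolding bfR_def by (simp add: algebra_simps sum_subtractf)
lemma bfR_rvec: "bfR Q (rvec x) (rvec y) = of_int (bf Q x y)"
  unfolding bfR_def bf_def rvec_def by simp
lemma bfR_cont: "continuous_on S (\<lambda>x. bfR Q x x)"
  unfolding bfR_def by (intro continuous_intros)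
lemma bfR_cont2: "continuous_on S (\<lambda>x. bfR Q x y)"
  unfolding bfR_def by (intro continuous_intros)

lemma det_of_int: "of_int (det Q) = (det (\<chi> i j. of_int (Q$i$j) :: real^'n^'n) :: real)"
  unfolding det_def by (simp add: of_int_sum of_int_prod)

lemma bfR_axis: "bfR Q y (axis j 1) = (\<Sum>i\<in>UNIV. y$i * of_int (Q$i$j))"
  unfolding bfR_def axis_def by (simp add: if_distrib cong: if_cong)



lemma finite_box: "finite A \<Longrightarrow> finite {x::int^'n. \<forall>i. x$i \<in> A}"
proof -
  assume fA: "finite A"
  have "{x::int^'n. \<forall>i. x$i \<in> A} \<subseteq> (\<lambda>f. \<chi> i. f i) ` (PiE UNIV (\<lambda>_. A))"
  proof
    fix x :: "int^'n" assume "x \<in> {x. \<forall>i. x$i \<in> A}"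
    hence "(\<lambda>i\<in>UNIV. x$i) \<in> PiE UNIV (\<lambda>_. A)" by auto
    moreover have "x = (\<chi> i. (\<lambda>i\<in>UNIV. x$i) i)" by (simp add: vec_eq_iff)
    ultimately show "x \<in> (\<lambda>f. \<chi> i. f i) ` (PiE UNIV (\<lambda>_. A))" by blast
  qed
  moreover have "finite (PiE (UNIV::'n set) (\<lambda>_. A))" using fA by (simp add: finite_PiE)
  ultimately show ?thesis using finite_subset by blast
qed

lemma neg_def_real:
  fixes Q :: "int^'n^'n"
  assumes pol: "polarized Q h" and y: "bfR Q y (rvec h) = 0" "y \<noteq> 0"
  shows "bfR Q y y < 0"
proof (rule ccontr)
  assume nlt: "\<not> bfR Q y y < 0"
  define hR where "hR = rvec h"
  have ev: "even_lattice Q" and hyp: "hyperbolic Q" using pol unfolding polarized_def hyperbolic_def by auto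
  have hpos: "bfR Q hR hR > 0" using pol unfolding hR_def bfR_rvec polarized_def by simp
  have semi: "bfR Q x x \<le> 0" if "bfR Q x hR = 0" for x
    using hyp hpos that bfR_sym[OF ev, of x hR] unfolding hyperbolic_def by auto
  have yy: "bfR Q y y = 0" using semi[of y] y nlt hR_def by auto
  have orth: "bfR Q y z = 0" if z: "bfR Q z hR = 0" for z
  proof (rule ccontr)
    define c where "c = bfR Q y z"
    define d where "d = bfR Q z z"
    assume "bfR Q y z \<noteq> 0"
    hence c0: "c \<noteq> 0" by (simp add: c_def)
    have d0: "d \<le> 0" using semi[OF z] d_def by simp
    define t where "t = c / (1 - d)"
    have "bfR Q (y + t *\<^sub>R z) hR = 0" using y z by (simp add: bfR_add_left bfR_scale_left hR_def)
    hence le: "bfR Q (y + t *\<^sub>R z) (y + t *\<^sub>R z) \<le> 0" by (rule semi)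
    have "bfR Q (y + t *\<^sub>R z) (y + t *\<^sub>R z) = 2*t*c + t^2*d"
      using yy bfR_sym[OF ev, of z y]
      by (simp add: bfR_add_left bfR_add_right bfR_scale_left bfR_scale_right c_def d_def power2_eq_square algebra_simps)
    also have "\<dots> = t^2*(2-d)"
    proof -
      have "c = t*(1-d)" using d0 by (simp add: t_def)
      show ?thesis by (subst \<open>c = t*(1-d)\<close>, simp add: power2_eq_square algebra_simps)
    qed
    also have "\<dots> > 0" using c0 d0 by (intro mult_pos_pos) (auto simp: t_def)
    finally show False using le by simp
  qed
  have all: "bfR Q y x = 0" for x
  proof -
    define s where "s = bfR Q x hR / bfR Q hR hR"
    have "bfR Q (x - s *\<^sub>R hR) hR = 0" using hpos by (simp add: bfR_diff_left bfR_scale_left s_def)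
    hence "bfR Q y (x - s *\<^sub>R hR) = 0" by (rule orth)
    moreover have "bfR Q y (x - s *\<^sub>R hR) = bfR Q y x - s * bfR Q y hR"
      using bfR_add_right[of Q y x "(-s) *\<^sub>R hR"] bfR_scale_right[of Q y "-s" hR] by simp
    ultimately show ?thesis using y hR_def by simp
  qed
  define M where "M = (\<chi> i j. of_int (Q$i$j) :: real^'n^'n)"
  have "M *v y = 0"
  proof -
    have "(M *v y)$j = 0" for j
    proof -
      have "(M *v y)$j = (\<Sum>i\<in>UNIV. y$i * of_int (Q$i$j))"
        using ev unfolding M_def matrix_vector_mult_def even_lattice_def by (simp add: mult.commute)
      also have "\<dots> = 0" using all[of "axis j 1"] bfR_axis by metis
      finally show ?thesis .
    qed
    thus ?thesis by (simp add: vec_eq_iff)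
  qed
  moreover have "det M \<noteq> 0" using pol det_of_int[of Q]
    unfolding M_def polarized_def hyperbolic_def nondegenerate_def by simp
  ultimately have "y = 0"
    using invertible_det_nz[of M] matrix_left_invertible_ker[of M] unfolding invertible_def by blast
  with y show False by simp
qed



lemma rvec_eq0: "rvec x = 0 \<longleftrightarrow> x = 0"
  unfolding rvec_def by (simp add: vec_eq_iff)

lemma neg_def_int:
  fixes Q :: "int^'n^'n"
  assumes pol: "polarized Q h" and "bf Q x h = 0" "x \<noteq> 0"
  shows "bf Q x x < 0"
  using neg_def_real[of Q h "rvec x", OF pol] assms by (simp add: bfR_rvec rvec_eq0)

lemma roots_finite:
  fixes Q :: "int^'n^'n"
  assumes pol: "polarized Q h"
  shows "finite (roots_n Q h 0)"
proof -
  define hR where "hR = rvec h"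
  define H where "H = {x. bfR Q x hR = 0}"
  define K where "K = H \<inter> sphere 0 1"
  have "\<exists>c>0. \<forall>x\<in>K. bfR Q x x \<le> -c"
  proof (cases "K = {}")
    case True thus ?thesis by (intro exI[of _ 1]) auto
  next
    case False
    have "closed H" unfolding H_def by (intro closed_Collect_eq continuous_on_const bfR_cont2)
    hence "compact K" unfolding K_def by (simp add: closed_Int_compact)
    then obtain x0 where x0: "x0 \<in> K" "\<forall>y\<in>K. bfR Q y y \<le> bfR Q x0 x0"
      using continuous_attains_sup[of K "\<lambda>x. bfR Q x x"] False bfR_cont by blast
    have "x0 \<noteq> 0" using x0(1) unfolding K_def by auto
    hence "bfR Q x0 x0 < 0" using x0(1) neg_def_real[of Q h x0, OF pol] unfolding K_def H_def hR_def by blast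
    thus ?thesis using x0 by (intro exI[of _ "- bfR Q x0 x0"]) auto
  qed
  then obtain c where c: "c > 0" "\<forall>x\<in>K. bfR Q x x \<le> -c" by blast
  have bound: "bfR Q x x \<le> -c * (norm x)^2" if "x \<in> H" for x
  proof (cases "x = 0")
    case True thus ?thesis by (simp add: bfR_def)
  next
    case False
    define u where "u = (1 / norm x) *\<^sub>R x"
    have "u \<in> K" using that False unfolding K_def H_def u_def by (auto simp: bfR_scale_left)
    hence "bfR Q u u \<le> -c" using c by blast
    moreover have "x = norm x *\<^sub>R u" using False by (simp add: u_def)
    hence "bfR Q x x = (norm x)^2 * bfR Q u u"
      by (metis bfR_scale_left bfR_scale_right mult.assoc power2_eq_square)
    ultimately show ?thesis
      by (metis mult_right_mono zero_le_power2 mult_minus_left mult.commute)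
  qed
  define B where "B = ceiling (1 + 2 / c)"
  have "roots_n Q h 0 \<subseteq> {x::int^'n. \<forall>i. x$i \<in> {-B..B}}"
  proof
    fix r assume r: "r \<in> roots_n Q h 0"
    have "rvec r \<in> H" using r unfolding H_def hR_def roots_n_def by (simp add: bfR_rvec)
    hence "bfR Q (rvec r) (rvec r) \<le> -c * (norm (rvec r))^2" by (rule bound)
    hence "c * (norm (rvec r))^2 \<le> 2" using r unfolding roots_n_def by (simp add: bfR_rvec)
    hence n2: "(norm (rvec r))^2 \<le> 2 / c" using c by (simp add: field_simps mult.commute)
    have "\<bar>r$i\<bar> \<le> B" for i
    proof -
      have "\<bar>rvec r $ i\<bar> \<le> norm (rvec r)" by (rule component_le_norm_cart)
      moreover have "norm (rvec r) \<le> 1 + (norm (rvec r))^2"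
        by (smt (verit) power2_eq_square mult_le_cancel_left1 norm_ge_zero zero_le_square)
      ultimately have "real_of_int \<bar>r$i\<bar> \<le> 1 + 2 / c" using n2 by (simp add: rvec_def)
      thus ?thesis unfolding B_def by linarith
    qed
    thus "r \<in> {x::int^'n. \<forall>i. x$i \<in> {-B..B}}" by (simp add: abs_le_iff) (meson minus_le_iff)
  qed
  thus ?thesis using finite_box[of "{-B..B}"] finite_subset by blast
qed



definition chv :: "int^'n^'n \<Rightarrow> int^'n \<Rightarrow> real^'n \<Rightarrow> (int^'n) set \<Rightarrow> bool" where
  "chv Q h v P \<longleftrightarrow> (\<forall>r\<in>roots_n Q h 0. bfR Q (rvec r) v \<noteq> 0) \<and>
     P = {r \<in> roots_n Q h 0. bfR Q (rvec r) v > 0}"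

lemma rvec_add: "rvec (x + y) = rvec x + rvec y"
  unfolding rvec_def by (simp add: vec_eq_iff)
lemma rvec_neg: "rvec (- x) = - rvec x"
  unfolding rvec_def by (simp add: vec_eq_iff)
lemma rvec_smult: "rvec (c *s x) = of_int c *\<^sub>R rvec x"
  unfolding rvec_def by (simp add: vec_eq_iff)
lemma bfR_neg_left: "bfR Q (- x) z = - bfR Q x z"
  unfolding bfR_def by (simp add: sum_negf)

lemma refl_add: "refl_root Q a (x + y) = refl_root Q a x + refl_root Q a y"
  unfolding refl_root_def by (simp add: bf_add_left vector_sadd_rdistrib)

locale pl =
  fixes Q :: "int^'n^'n" and h :: "int^'n"
  assumes pol: "polarized Q h"
begin

abbreviation "R \<equiv> roots_n Q h 0"

lemma ev: "even_lattice Q" using pol unfolding polarized_def hyperbolic_def by auto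

lemma finR: "finite R" using roots_finite[OF pol] .

lemma neg_root: "r \<in> R \<Longrightarrow> - r \<in> R"
  unfolding roots_n_def by (simp add: bf_neg_left bf_neg_right)

lemma root_nz: "r \<in> R \<Longrightarrow> r \<noteq> 0"
  unfolding roots_n_def by auto

lemma s_bf: assumes "a \<in> R" shows "bf Q (refl_root Q a x) (refl_root Q a y) = bf Q x y"
proof -
  have aa: "bf Q a a = -2" using assms unfolding roots_n_def by simp
  have "bf Q y a = bf Q a y" by (rule bf_sym[OF ev])
  thus ?thesis unfolding refl_root_def
    by (simp add: bf_add_left bf_add_right bf_smult_left bf_smult_right aa algebra_simps)
qed

lemma s_h: assumes "a \<in> R" shows "refl_root Q a h = h"
proof -
  have "bf Q h a = 0" using assms bf_sym[OF ev, of a h] unfolding roots_n_def by simp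
  thus ?thesis unfolding refl_root_def by simp
qed

lemma s_invol: assumes "a \<in> R" shows "refl_root Q a (refl_root Q a x) = x"
proof -
  have aa: "bf Q a a = -2" using assms unfolding roots_n_def by simp
  show ?thesis unfolding refl_root_def
    by (simp add: bf_add_left bf_smult_left aa vec_eq_iff algebra_simps)
qed

lemma s_bij: assumes "a \<in> R" shows "bij (refl_root Q a)"
  by (rule bij_betw_byWitness[where f' = "refl_root Q a"]) (auto simp: s_invol[OF assms])

lemma s_root: assumes "a \<in> R" "r \<in> roots_n Q h n" shows "refl_root Q a r \<in> roots_n Q h n"
proof -
  have "bf Q (refl_root Q a r) h = bf Q r h" using s_bf[OF assms(1), of r h] s_h[OF assms(1)] by simp
  thus ?thesis using assms(2) s_bf[OF assms(1), of r r] unfolding roots_n_def by simp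
qed

lemma W_props:
  assumes "w \<in> weyl_group Q h"
  shows "(\<forall>x y. bf Q (w x) (w y) = bf Q x y) \<and> w h = h \<and> bij w \<and> (\<forall>x y. w (x + y) = w x + w y)"
  using assms
proof (induction rule: weyl_group.induct)
  case id thus ?case using bij_id by (simp add: id_def)
next
  case (step w r)
  thus ?case using s_bf[OF step(2)] s_h[OF step(2)] s_bij[OF step(2)] refl_add[of Q r]
    by (simp add: bij_comp[of w "refl_root Q r", unfolded o_def])
qed

lemma ch_neg: assumes "chv Q h v P" "r \<in> R" "r \<notin> P" shows "- r \<in> P"
  using assms neg_root[OF assms(2)] unfolding chv_def by (auto simp: rvec_neg bfR_neg_left)

lemma ch_neg2: assumes "chv Q h v P" "r \<in> P" shows "- r \<notin> P"
  using assms unfolding chv_def by (auto simp: rvec_neg bfR_neg_left)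

lemma ch_sub: "chv Q h v P \<Longrightarrow> P \<subseteq> R" unfolding chv_def by auto

lemma ch_refl:
  assumes "chv Q h v P" "a \<in> R"
  shows "chv Q h (v + bfR Q v (rvec a) *\<^sub>R rvec a) (refl_root Q a ` P)"
proof -
  let ?s = "refl_root Q a"
  let ?v = "v + bfR Q v (rvec a) *\<^sub>R rvec a"
  have key: "bfR Q (rvec (?s r)) v = bfR Q (rvec r) ?v" for r
  proof -
    have "bfR Q (rvec a) v = bfR Q v (rvec a)" by (rule bfR_sym[OF ev])
    thus ?thesis unfolding refl_root_def
      by (simp add: rvec_add rvec_smult bfR_add_left bfR_add_right bfR_scale_left bfR_scale_right bfR_rvec)
  qed
  have memR: "?s r \<in> R \<longleftrightarrow> r \<in> R" for r
    using s_root[OF assms(2)] s_invol[OF assms(2)] by metis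
  have img: "?s ` P = {r. ?s r \<in> P}"
    using s_invol[OF assms(2)] by (auto intro!: image_eqI)
  show ?thesis unfolding chv_def
  proof
    show "\<forall>r\<in>R. bfR Q (rvec r) ?v \<noteq> 0" using assms(1) memR key unfolding chv_def by metis
    show "?s ` P = {r \<in> R. bfR Q (rvec r) ?v > 0}"
      unfolding img using assms(1) memR key unfolding chv_def by auto
  qed
qed

lemma decomp:
  assumes c: "chv Q h v P" and c': "chv Q h v' P'" and sub: "simple_roots P \<subseteq> P'"
  shows "P \<subseteq> P'"
proof -
  define f where "f = (\<lambda>g. bfR Q (rvec g) v)"
  define f' where "f' = (\<lambda>g. bfR Q (rvec g) v')"
  have finP: "finite P" using ch_sub[OF c] finR finite_subset by blast
  have "\<forall>b. card {g\<in>P. f g < f b} = n \<longrightarrow> b \<in> P \<longrightarrow> b \<in> P'" for n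
  proof (induction n rule: less_induct)
    case (less n)
    show ?case
    proof (intro allI impI)
      fix b assume n: "card {g\<in>P. f g < f b} = n" and bP: "b \<in> P"
      show "b \<in> P'"
      proof (cases "b \<in> simple_roots P")
        case True thus ?thesis using sub by blast
      next
        case False
        then obtain x y where xy: "x \<in> P" "y \<in> P" "b = x + y" using bP unfolding simple_roots_def by blast
        have pos: "f x > 0" "f y > 0" using xy c unfolding chv_def f_def by auto
        have fb: "f b = f x + f y" using xy unfolding f_def by (simp add: rvec_add bfR_add_left)
        have IHx: "x \<in> P'" if "x \<in> P" "f x < f b" for x
        proof -
          have ps: "{g\<in>P. f g < f x} \<subset> {g\<in>P. f g < f b}" using that by auto
          have fs: "finite {g\<in>P. f g < f b}" using finP by simp
          have "card {g\<in>P. f g < f x} < n" using psubset_card_mono[OF fs ps] n by simp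
          thus ?thesis using less that by blast
        qed
        have "x \<in> P'" "y \<in> P'" using IHx xy pos fb by auto
        hence "f' x > 0" "f' y > 0" using c' unfolding chv_def f'_def by auto
        moreover have "f' b = f' x + f' y" using xy unfolding f'_def by (simp add: rvec_add bfR_add_left)
        moreover have "b \<in> R" using bP ch_sub[OF c] by blast
        ultimately show ?thesis using c' unfolding chv_def f'_def by auto
      qed
    qed
  qed
  thus ?thesis by blast
qed

lemma ch_eq:
  assumes c: "chv Q h v P" and c': "chv Q h v' P'" and sub: "P \<subseteq> P'"
  shows "P = P'"
proof (rule ccontr)
  assume "P \<noteq> P'"
  then obtain b where b: "b \<in> P'" "b \<notin> P" using sub by blast
  hence "- b \<in> P" using ch_neg[OF c] ch_sub[OF c'] by blast
  hence "- b \<in> P'" using sub by blast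
  thus False using ch_neg2[OF c' b(1)] by simp
qed

lemma simple_refl:
  assumes c: "chv Q h v P" and a: "a \<in> simple_roots P"
  shows "refl_root Q a ` P = (P - {a}) \<union> {- a}"
proof -
  let ?s = "refl_root Q a"
  have aP: "a \<in> P" using a unfolding simple_roots_def by blast
  have aR: "a \<in> R" using aP ch_sub[OF c] by blast
  have aa: "bf Q a a = -2" using aR unfolding roots_n_def by simp
  have sa: "?s a = - a" unfolding refl_root_def using aa
    by (simp add: vec_eq_iff)
  have f_add: "bfR Q (rvec (x + y)) v = bfR Q (rvec x) v + bfR Q (rvec y) v" for x y
    by (simp add: rvec_add bfR_add_left)
  have one: "?s b \<in> P - {a}" if b: "b \<in> P" "b \<noteq> a" for b
  proof -
    have bR: "b \<in> R" using b ch_sub[OF c] by blast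
    have bb: "bf Q b b = -2" "bf Q b h = 0" "bf Q a h = 0" using bR aR unfolding roots_n_def by auto
    have nma: "b \<noteq> - a" using ch_neg2[OF c aP] b by blast
    define k where "k = bf Q b a"
    have ab: "bf Q a b = k" using bf_sym[OF ev] k_def by metis
    have "bf Q (b - a) (b - a) < 0"
      using b(2) bb by (intro neg_def_int[OF pol]) (auto simp: bf_diff_left)
    hence k1: "k > -2" using bb aa ab k_def by (simp add: bf_diff_left bf_diff_right)
    have "bf Q (b + a) (b + a) < 0"
      using nma bb by (intro neg_def_int[OF pol]) (auto simp: bf_add_left add_eq_0_iff2 neg_eq_iff_add_eq_0)
    hence k2: "k < 2" using bb aa ab k_def by (simp add: bf_add_left bf_add_right)
    have "?s b \<in> P"
    proof -
      have "k = 0 \<or> k = 1 \<or> k = -1" using k1 k2 by linarith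
      moreover
      { assume "k = 0" hence "?s b = b" unfolding refl_root_def k_def by simp
        hence ?thesis using b by simp }
      moreover
      { assume k: "k = 1" hence sb: "?s b = b + a" unfolding refl_root_def k_def by simp
        have "b + a \<in> R" using bb aa ab k unfolding roots_n_def k_def by (simp add: bf_add_left bf_add_right)
        moreover have "bfR Q (rvec (b + a)) v > 0" using b(1) aP c unfolding chv_def f_add by auto
        ultimately have ?thesis using c sb unfolding chv_def by auto }
      moreover
      { assume k: "k = -1" hence sb: "?s b = b - a" unfolding refl_root_def k_def
          by (simp add: vec_eq_iff)
        have bmR: "b - a \<in> R" using bb aa ab k unfolding roots_n_def k_def by (simp add: bf_diff_left bf_diff_right)
        have ?thesis
        proof (rule ccontr)
          assume "\<not> ?thesis"
          hence "- (b - a) \<in> P" using ch_neg[OF c bmR] sb by simp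
          hence "a - b \<in> P" by simp
          moreover have "a = (a - b) + b" by simp
          ultimately show False using a b(1) unfolding simple_roots_def by blast
        qed }
      ultimately show ?thesis by blast
    qed
    moreover have "?s b \<noteq> a" using nma s_invol[OF aR, of b] sa by metis
    ultimately show ?thesis by blast
  qed
  show ?thesis
  proof
    show "?s ` P \<subseteq> P - {a} \<union> {- a}" using one sa by auto
    show "P - {a} \<union> {- a} \<subseteq> ?s ` P"
    proof
      fix x assume "x \<in> P - {a} \<union> {- a}"
      thus "x \<in> ?s ` P"
      proof
        assume x: "x \<in> P - {a}"
        hence "?s x \<in> P" using one by blast
        moreover have "x = ?s (?s x)" using s_invol[OF aR] by simp
        ultimately show ?thesis by blast
      next
        assume "x \<in> {- a}" thus ?thesis using sa aP by (auto intro!: image_eqI[of _ _ a])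
      qed
    qed
  qed
qed

lemma transitive:
  "chv Q h v1 P1 \<Longrightarrow> chv Q h v2 P2 \<Longrightarrow> \<exists>w\<in>weyl_group Q h. w ` P1 = P2"
proof (induction "card (P1 - P2)" arbitrary: v2 P2 rule: less_induct)
  case (less P2 v2)
  note c1 = less.prems(1) and c2 = less.prems(2)
  show ?case
  proof (cases "P1 = P2")
    case True thus ?thesis using weyl_group.id[of Q h] by (intro bexI[of _ id]) auto
  next
    case False
    hence "\<not> P2 \<subseteq> P1" using ch_eq[OF c2 c1] by blast
    hence "\<not> simple_roots P2 \<subseteq> P1" using decomp[OF c2 c1] by blast
    then obtain a where a: "a \<in> simple_roots P2" "a \<notin> P1" by blast
    have aP: "a \<in> P2" using a unfolding simple_roots_def by blast
    have aR: "a \<in> R" using aP ch_sub[OF c2] by blast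
    let ?s = "refl_root Q a"
    have c2': "chv Q h (v2 + bfR Q v2 (rvec a) *\<^sub>R rvec a) (?s ` P2)" by (rule ch_refl[OF c2 aR])
    have img: "?s ` P2 = (P2 - {a}) \<union> {- a}" by (rule simple_refl[OF c2 a(1)])
    have ma1: "- a \<in> P1" using ch_neg[OF c1 aR a(2)] .
    have ma2: "- a \<notin> P2" using ch_neg2[OF c2 aP] .
    have "P1 - ?s ` P2 = (P1 - P2) - {- a}" unfolding img using a(2) by auto
    moreover have "finite (P1 - P2)" using ch_sub[OF c1] finR finite_subset by blast
    moreover have "- a \<in> P1 - P2" using ma1 ma2 by blast
    ultimately have "card (P1 - ?s ` P2) < card (P1 - P2)"
      by (metis card_Diff1_less)
    then obtain w where w: "w \<in> weyl_group Q h" "w ` P1 = ?s ` P2"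
      using less.hyps[OF _ c1 c2'] by blast
    have "(?s \<circ> w) ` P1 = ?s ` (?s ` P2)" by (metis image_comp w(2))
    also have "\<dots> = P2" by (simp add: image_image s_invol[OF aR])
    finally have "(?s \<circ> w) ` P1 = P2" .
    moreover have "?s \<circ> w \<in> weyl_group Q h" by (rule weyl_group.step[OF w(1) aR])
    ultimately show ?thesis by blast
  qed
qed

end



lemma simple_img:
  assumes inj: "inj w" and add: "\<forall>x y. w (x + y) = w x + w y"
  shows "simple_roots (w ` P) = w ` simple_roots P"
proof -
  have eq: "w r = w a + w b \<longleftrightarrow> r = a + b" for r a b
    using inj add by (metis injD)
  show ?thesis unfolding simple_roots_def
  proof (intro equalityI subsetI)
    fix x assume "x \<in> {r \<in> w ` P. \<not> (\<exists>a\<in>w ` P. \<exists>b\<in>w ` P. r = a + b)}"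
    then obtain r where r: "r \<in> P" "x = w r" "\<not> (\<exists>a\<in>w ` P. \<exists>b\<in>w ` P. w r = a + b)" by blast
    hence "\<not> (\<exists>a\<in>P. \<exists>b\<in>P. r = a + b)" using eq by blast
    thus "x \<in> w ` {r \<in> P. \<not> (\<exists>a\<in>P. \<exists>b\<in>P. r = a + b)}" using r by blast
  next
    fix x assume "x \<in> w ` {r \<in> P. \<not> (\<exists>a\<in>P. \<exists>b\<in>P. r = a + b)}"
    then obtain r where r: "r \<in> P" "x = w r" "\<not> (\<exists>a\<in>P. \<exists>b\<in>P. r = a + b)" by blast
    hence "\<not> (\<exists>a\<in>w ` P. \<exists>b\<in>w ` P. w r = a + b)" using eq by blast
    moreover have "w r \<in> w ` P" using r(1) by blast
    ultimately show "x \<in> {r \<in> w ` P. \<not> (\<exists>a\<in>w ` P. \<exists>b\<in>w ` P. r = a + b)}" using r(2) by simp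
  qed
qed

theorem lemma2p3:
  fixes Q :: "int^'n^'n" and h :: "int^'n" and P1 P2 :: "(int^'n) set"
  assumes "polarized Q h"
    and "weyl_chamber Q h P1"
    and "weyl_chamber Q h P2"
  shows "\<exists>w\<in>weyl_group Q h. w ` P1 = P2 \<and>
           graph_iso Q (fano Q h P1) (fano Q h P2) w \<and>
           colored_graph_iso Q h (fano_ext Q h P1) (fano_ext Q h P2) w"
proof -
  interpret pl Q h by unfold_locales (rule assms(1))
  obtain v1 where "chv Q h v1 P1" using assms(2) unfolding weyl_chamber_def chv_def by blast
  moreover obtain v2 where "chv Q h v2 P2" using assms(3) unfolding weyl_chamber_def chv_def by blast
  ultimately obtain w where wW: "w \<in> weyl_group Q h" and wP: "w ` P1 = P2" using transitive by blast
  have iso: "\<And>x y. bf Q (w x) (w y) = bf Q x y" and wh: "w h = h" and bij: "bij w"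
    and add: "\<forall>x y. w (x + y) = w x + w y" using W_props[OF wW] by auto
  have inj: "inj w" using bij bij_is_inj by blast
  have injon: "inj_on w A" for A using inj by (meson inj_on_subset subset_UNIV)
  have wh': "bf Q (w x) h = bf Q x h" for x using iso[of x h] wh by simp
  have simp2: "simple_roots P2 = w ` simple_roots P1" using simple_img[OF inj add] wP by blast
  have rootn: "w x \<in> roots_n Q h n \<longleftrightarrow> x \<in> roots_n Q h n" for x n
    unfolding roots_n_def using iso[of x x] wh' by simp
  have fimg: "w ` fano Q h P1 = fano Q h P2"
  proof (intro equalityI subsetI)
    fix y assume "y \<in> w ` fano Q h P1"
    then obtain l where l: "l \<in> fano Q h P1" "y = w l" by blast
    show "y \<in> fano Q h P2" using l rootn iso unfolding fano_def simp2 by auto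
  next
    fix y assume y: "y \<in> fano Q h P2"
    obtain l where l: "y = w l" using bij by (metis bij_pointE)
    have "l \<in> fano Q h P1" using y l rootn iso unfolding fano_def simp2 by auto
    thus "y \<in> w ` fano Q h P1" using l by blast
  qed
  have eimg: "w ` fano_ext Q h P1 = fano_ext Q h P2"
    unfolding fano_ext_def image_Un fimg simp2 by simp
  have g1: "graph_iso Q (fano Q h P1) (fano Q h P2) w"
    unfolding graph_iso_def using fimg injon iso by (auto simp: bij_betw_def inj_on_subset)
  have g2: "colored_graph_iso Q h (fano_ext Q h P1) (fano_ext Q h P2) w"
    unfolding colored_graph_iso_def graph_iso_def using eimg injon iso wh' by (auto simp: bij_betw_def inj_on_subset)
  show ?thesis using wW wP g1 g2 by blast
qed


end
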